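(* Let $n,k$ be positive integers and $i\in\{1,\ldots,n\}$ such that $k\cdot\frac{i}{n}\cdot \frac{n-i}{n}< 1$, $n\ge 8k$, and $i>n/2$. If $H\sim\text{Hyp}(n,i,k)$, then $\mathbb{P}(H \ge ik/n) \ge \frac{k}{n}$.
   Context: $\text{Hyp}(n,i,k)$ denotes the hypergeometric distribution: the number of black marbles in a sample without replacement of size $k$ from an urn with $i$ black and $n-i$ white marbles, i.e. $\mathbb{P}(H=j)=\binom{i}{j}\binom{n-i}{k-j}/\binom{n}{k}$. *)

theory Defs
  imports Complex_Main
begin

definition hyp_pmf :: "nat \<Rightarrow> nat \<Rightarrow> nat \<Rightarrow> nat \<Rightarrow> real" where
  "hyp_pmf n i k j =
     (if j \<le> k then real (i choose j) * real ((n - i) choose (k - j)) / real (n choose k) else 0)"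

definition hyp_tail :: "nat \<Rightarrow> nat \<Rightarrow> nat \<Rightarrow> real \<Rightarrow> real" where
  "hyp_tail n i k t = (\<Sum>j \<in> {j. j \<le> k \<and> real j \<ge> t}. hyp_pmf n i k j)"

end

theory Submission imports Defs "HOL-Analysis.Complex_Transcendental" begin

lemma ratio_prod:
  fixes a b m :: nat
  assumes "m \<le> a" "a \<le> b"
  shows "real (a choose m) / real (b choose m) = (\<Prod>j = 0..<m. real (a - j) / real (b - j))"
proof -
  have "real (a choose m) / real (b choose m)
     = (\<Prod>j = 0..<m. real (a - j) / real (m - j)) / (\<Prod>j = 0..<m. real (b - j) / real (m - j))"
    using assms by (simp add: binomial_altdef_of_nat)
  also have "\<dots> = (\<Prod>j = 0..<m. (real (a - j) / real (m - j)) / (real (b - j) / real (m - j)))"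
    by (rule prod_dividef[symmetric])
  also have "\<dots> = (\<Prod>j = 0..<m. real (a - j) / real (b - j))"
    by (rule prod.cong) auto
  finally show ?thesis .
qed

lemma ratio_bound:
  fixes a b m :: nat
  assumes "1 \<le> m" "m \<le> a" "a \<le> b"
  shows "real (a choose m) / real (b choose m) \<ge> (real (a - m + 1) / real (b - m + 1)) ^ m"
proof -
  have "(real (a - m + 1) / real (b - m + 1)) ^ m = (\<Prod>j = 0..<m. real (a - m + 1) / real (b - m + 1))"
    by simp
  also have "\<dots> \<le> (\<Prod>j = 0..<m. real (a - j) / real (b - j))"
  proof (rule prod_mono)
    fix j assume "j \<in> {0..<m}"
    hence j: "j < m" by simp
    have b1: "real (b - m + 1) > 0" using assms by simp
    have b2: "real (b - j) > 0" using assms j by simp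
    have "real (a - m + 1) * real (b - j) \<le> real (a - j) * real (b - m + 1)"
    proof -
      have e1: "real (a - m + 1) = real a - real m + 1" using assms by (simp add: of_nat_diff)
      have e2: "real (b - j) = real b - real j" using assms j by (simp add: of_nat_diff)
      have e3: "real (a - j) = real a - real j" using assms j by (simp add: of_nat_diff)
      have e4: "real (b - m + 1) = real b - real m + 1" using assms by (simp add: of_nat_diff)
      have "(real a - real j) * (real b - real m + 1) - (real a - real m + 1) * (real b - real j)
            = (real m - 1 - real j) * (real b - real a)"
        by (simp add: algebra_simps)
      moreover have "(real m - 1 - real j) * (real b - real a) \<ge> 0"
        using j assms by (intro mult_nonneg_nonneg) auto
      ultimately show ?thesis unfolding e1 e2 e3 e4 by linarith
    qed
    thus "0 \<le> real (a - m + 1) / real (b - m + 1) \<and>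
          real (a - m + 1) / real (b - m + 1) \<le> real (a - j) / real (b - j)"
      using b1 b2 by (simp add: divide_simps)
  qed
  also have "\<dots> = real (a choose m) / real (b choose m)"
    using assms by (simp add: ratio_prod)
  finally show ?thesis .
qed

lemma pow_bound:
  fixes c :: real and m :: nat
  assumes "0 < c" "real m * (1 - c) \<le> 2 * c"
  shows "c ^ m \<ge> 1/8"
proof -
  have "ln (1/c) \<le> 1/c - 1" using assms by (intro ln_le_minus_one) simp
  hence l: "ln c \<ge> 1 - 1/c" using assms by (simp add: ln_div)
  have "real m * (1 - 1/c) \<ge> -2"
  proof -
    have "real m * (1 - 1/c) = - (real m * (1 - c)) / c" using assms by (simp add: field_simps)
    also have "\<dots> \<ge> -2" using assms by (simp add: field_simps)
    finally show ?thesis .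
  qed
  hence "real m * ln c \<ge> -2" using l
    by (smt (verit) mult_left_mono of_nat_0_le_iff)
  have "c ^ m = exp (real m * ln c)" using assms by (simp add: exp_of_nat_mult)
  also have "\<dots> \<ge> exp (-2)" using \<open>real m * ln c \<ge> -2\<close> by simp
  finally have "c ^ m \<ge> exp (-2)" .
  moreover have "exp (-2::real) \<ge> 1/8"
  proof -
    have "exp (2::real) = exp 1 * exp 1" by (simp add: exp_add[symmetric])
    also have "\<dots> \<le> (272/100) * (272/100)" using e_less_272
      by (intro mult_mono) auto
    finally have "exp (2::real) \<le> 8" by simp
    thus ?thesis by (simp add: exp_minus field_simps)
  qed
  ultimately show ?thesis by linarith
qed


lemma tail_ge:
  assumes "j \<le> k" "real j \<ge> t"
  shows "hyp_tail n i k t \<ge> hyp_pmf n i k j"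
  unfolding hyp_tail_def
proof (rule member_le_sum)
  show "j \<in> {j. j \<le> k \<and> t \<le> real j}" using assms by simp
  show "finite {j. j \<le> k \<and> t \<le> real j}" by (rule finite_subset[of _ "{..k}"]) auto
  fix x show "0 \<le> hyp_pmf n i k x" unfolding hyp_pmf_def by simp
qed

theorem lemma11:
  fixes n k i :: nat
  assumes "n > 0" and "k > 0"
    and "1 \<le> i" and "i \<le> n"
    and "real k * (real i / real n) * (real (n - i) / real n) < 1"
    and "n \<ge> 8 * k"
    and "real i > real n / 2"
  shows "hyp_tail n i k (real i * real k / real n) \<ge> real k / real n"
proof -
  define w where "w = n - i"
  have iw: "i = n - w" "w \<le> n" "real i = real n - real w" using assms(4) unfolding w_def by (auto simp: of_nat_diff)
  have w2: "2 * w < n" using assms(7) iw by linarith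
  have ik: "4 * k < i" using assms(6,7) by linarith
  have kwi: "real k * real w * (real n - real w) < real n * real n"
  proof -
    have "real k * (real i / real n) * (real w / real n) < 1" using assms(5) unfolding w_def .
    hence "real k * real i * real w / (real n * real n) < 1" by (simp add: field_simps)
    thus ?thesis using assms(1) iw by (simp add: field_simps)
  qed
  have kn: "real k / real n \<le> 1/8" using assms(1,6) by (simp add: field_simps)
  show ?thesis
  proof (cases "k * w < n")
    case True
    have "hyp_tail n i k (real i * real k / real n) \<ge> hyp_pmf n i k k"
    proof (rule tail_ge)
      have "real i * real k \<le> real n * real k" using assms(4) by (intro mult_right_mono) auto
      thus "real i * real k / real n \<le> real k" using assms(1) by (simp add: field_simps)
    qed simp
    moreover have hk: "hyp_pmf n i k k = real (i choose k) / real (n choose k)"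
      unfolding hyp_pmf_def by simp
    define c where "c = real (i - k + 1) / real (n - k + 1)"
    have rb: "real (i choose k) / real (n choose k) \<ge> c ^ k"
      unfolding c_def using ik assms by (intro ratio_bound) auto
    have cpos: "c > 0" unfolding c_def using ik assms by simp
    have "c ^ k \<ge> real k / real n"
    proof (cases "k \<le> 2")
      case True
      have "real (2 * w + 1) \<le> real n" unfolding of_nat_le_iff using w2 by simp
      hence r: "2 * real w + 1 \<le> real n" by simp
      have "real k \<le> 2" using True by simp
      hence "2 * (real i - real k + 1) \<ge> real n - real k + 1" using r iw(3) by (simp add: algebra_simps)
      hence "c \<ge> 1/2" unfolding c_def using ik assms by (simp add: field_simps of_nat_diff)
      hence "c ^ k \<ge> (1/2) ^ k" by (intro power_mono) auto
      moreover have "((1::real)/2) ^ k \<ge> 1/4" using True assms(2)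
        by (cases k; cases "k - 1"; simp)
      ultimately show ?thesis using kn by linarith
    next
      case False
      define K where "K = real k"
      define W where "W = real w"
      define N where "N = real n"
      have K3: "K \<ge> 3" using False unfolding K_def by simp
      have NK: "N \<ge> 8 * K" using assms(6) unfolding K_def N_def by simp
      have h1: "K * W \<le> N - 1"
      proof -
        have "k * w + 1 \<le> n" using True by simp
        hence "real (k * w + 1) \<le> real n" by (simp only: of_nat_le_iff)
        thus ?thesis unfolding K_def W_def N_def by simp
      qed
      have p1: "(K - 2) * N \<ge> (K - 2) * (8 * K)" using NK K3 by (intro mult_left_mono) auto
      have p2: "K * (6 * K - 13) \<ge> 0" using K3 by simp
      have "K * (2 * W) \<le> K * (N - 2 * K + 3)"
        using h1 p1 p2 by (simp add: algebra_simps)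
      hence h2: "2 * W \<le> N - 2 * K + 3" using K3 by simp
      have "real k * real w \<le> 2 * (real i - real k + 1)"
        using h1 h2 iw unfolding K_def W_def N_def by simp
      moreover have "real k * (1 - c) = real k * real w / (real n - real k + 1)"
        unfolding c_def using ik iw by (simp add: of_nat_diff field_simps)
      moreover have "2 * c = 2 * (real i - real k + 1) / (real n - real k + 1)"
        unfolding c_def using ik iw by (simp add: of_nat_diff algebra_simps)
      moreover have "real n - real k + 1 > 0" using ik iw by simp
      ultimately have "real k * (1 - c) \<le> 2 * c" by (simp add: divide_right_mono)
      hence "c ^ k \<ge> 1/8" using cpos by (intro pow_bound) auto
      thus ?thesis using kn by linarith
    qed
    ultimately show ?thesis using hk rb by linarith
  next
    case False
    hence kw: "n \<le> k * w" by simp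
    have k3: "k \<ge> 3" using kw w2 by (cases "k \<le> 2") (auto dest: mult_le_mono1[of k 2 w])
    have "k * 8 \<le> k * w" using kw assms(6) by linarith
    hence w8: "w \<ge> 8" using assms(2) by simp
    have T1: "hyp_tail n i k (real i * real k / real n) \<ge> hyp_pmf n i k (k - 1)"
    proof (rule tail_ge)
      have "real n \<le> real k * real w" using kw by (metis of_nat_le_iff of_nat_mult)
      thus "real i * real k / real n \<le> real (k - 1)" using assms(1,2) iw
        by (simp add: field_simps of_nat_diff)
    qed simp
    have E: "hyp_pmf n i k (k - 1) = real k / real n * (real w * (real (i choose (k-1)) / real ((n-1) choose (k-1))))"
    proof -
      have e: "real k * real (n choose k) = real n * real ((n-1) choose (k-1))"
        using times_binomial_minus1_eq[OF assms(2), of n] by (metis of_nat_mult)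
      have "(n - i) choose (k - (k - 1)) = w" using assms(2) unfolding w_def by simp
      hence "hyp_pmf n i k (k - 1) = real (i choose (k-1)) * real w / real (n choose k)"
        unfolding hyp_pmf_def by simp
      moreover have "real (n choose k) = real n * real ((n-1) choose (k-1)) / real k"
        using e assms(2) by (simp add: field_simps)
      ultimately show ?thesis by simp
    qed
    define c where "c = real (i - (k - 1) + 1) / real (n - 1 - (k - 1) + 1)"
    have rb: "real (i choose (k-1)) / real ((n-1) choose (k-1)) \<ge> c ^ (k-1)"
      unfolding c_def using ik assms iw k3 w8 by (intro ratio_bound) auto
    have cpos: "c > 0" unfolding c_def using ik assms by simp
    have c8: "c ^ (k - 1) \<ge> 1/8"
    proof (cases "k \<le> 4")
      case True
      have "real (2 * w + 1) \<le> real n" unfolding of_nat_le_iff using w2 by simp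
      hence r: "2 * real w + 1 \<le> real n" by simp
      have "real k \<le> 4" using True by simp
      hence "2 * (real i - real k + 2) \<ge> real n - real k + 1" using r iw(3) by (simp add: algebra_simps)
      moreover have "i - (k - 1) + 1 = i - k + 2" "n - 1 - (k - 1) + 1 = n - k + 1" using ik k3 iw w8 by auto
      ultimately have "c \<ge> 1/2" unfolding c_def using ik assms by (simp add: field_simps of_nat_diff)
      hence "c ^ (k-1) \<ge> (1/2) ^ (k-1)" by (intro power_mono) auto
      moreover have "((1::real)/2) ^ (k-1) \<ge> 1/8" 
      proof -
        have "k - 1 = 2 \<or> k - 1 = 3" using True k3 by auto
        thus ?thesis by (auto simp: power_divide)
      qed
      ultimately show ?thesis by linarith
    next
      case False
      define K where "K = real k"
      define W where "W = real w"
      define N where "N = real n"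
      have K5: "K \<ge> 5" using False unfolding K_def by simp
      have NK: "N \<ge> 8 * K" using assms(6) unfolding K_def N_def by simp
      have WN: "2 * W < N" using w2 unfolding W_def N_def by simp
      have W0: "W \<ge> 0" unfolding W_def by simp
      have kwi': "K * W * (N - W) < N * N" using kwi unfolding K_def W_def N_def .
      have W28: "W \<le> 28/100 * N"
      proof (rule ccontr)
        assume "\<not> ?thesis"
        hence "(W - 28/100 * N) * (72/100 * N - W) > 0" using WN by (intro mult_pos_pos) auto
        moreover have "(W - 28/100 * N) * (72/100 * N - W) = W * (N - W) - 2016/10000 * (N * N)"
          by (simp add: field_simps)
        ultimately have a1: "W * (N - W) > 2016/10000 * (N * N)" by linarith
        have a2: "K * (W * (N - W)) \<ge> 5 * (W * (N - W))"
          using K5 WN W0 by (intro mult_right_mono) auto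
        have a3: "K * W * (N - W) = K * (W * (N - W))" by (simp only: mult.assoc)
        have a4: "N * N \<ge> 0" by simp
        show False using a1 a2 a3 a4 kwi' by linarith
      qed
      have "K * W * (72/100 * N) \<le> K * W * (N - W)"
        using W28 K5 W0 by (intro mult_left_mono) auto
      hence "K * W * (72/100 * N) < N * N" using kwi' by linarith
      moreover have "K * W * (72/100 * N) = (K * W * (72/100)) * N" by (simp add: algebra_simps)
      moreover have "N > 0" using NK K5 by linarith
      ultimately have KW: "K * W * (72/100) < N" using mult_less_cancel_right_pos[of N "K * W * (72/100)" N]
        by simp
      have eKW: "(K - 1) * (W - 1) = K * W - K - W + 1" by (simp add: algebra_simps)
      have hB: "(K - 1) * (W - 1) \<le> 2 * (N - W - K + 2)"
      proof -
        have "K * W < 100/72 * N" using KW by (simp add: field_simps)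
        thus ?thesis using W28 NK K5 by (simp add: algebra_simps)
      qed
      have e1: "i - (k - 1) + 1 = i - k + 2" "n - 1 - (k - 1) + 1 = n - k + 1" using ik k3 iw w8 by auto
      have cB: "c = (N - W - K + 2) / (N - K + 1)"
        unfolding c_def e1 K_def W_def N_def using ik iw by (simp add: of_nat_diff algebra_simps)
      have dB: "N - K + 1 > 0" using NK K5 by linarith
      have "1 - c = (W - 1) / (N - K + 1)" unfolding cB using dB by (simp add: field_simps)
      hence "real (k - 1) * (1 - c) = (K - 1) * (W - 1) / (N - K + 1)"
        unfolding K_def using k3 by (simp add: of_nat_diff)
      moreover have "2 * c = 2 * (N - W - K + 2) / (N - K + 1)" unfolding cB by simp
      ultimately have "real (k - 1) * (1 - c) \<le> 2 * c" using hB dB by (simp add: divide_right_mono)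
      thus ?thesis using cpos by (intro pow_bound) auto
    qed
    have w8r: "real w \<ge> 8" using w8 by simp
    have wc: "real w * c ^ (k - 1) \<ge> 8 * (1/8)"
      using c8 w8r by (intro mult_mono) auto
    have "real w * (real (i choose (k-1)) / real ((n-1) choose (k-1))) \<ge> real w * c ^ (k - 1)"
      using rb by (intro mult_left_mono) auto
    hence "real w * (real (i choose (k-1)) / real ((n-1) choose (k-1))) \<ge> 1" using wc by linarith
    hence F: "real k / real n * (real w * (real (i choose (k-1)) / real ((n-1) choose (k-1)))) \<ge> real k / real n * 1"
      by (intro mult_left_mono) auto
    show ?thesis using T1 E F by linarith

  qed
qed

end
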